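(* Let $n=2k$ be a positive even integer, $\theta=\frac{2\pi}{n+2}$, and let $\mathcal{N}=\{(\ell_j,r_j): j\in[1:n]\}$ be given by $$\ell_{2i}=\ell_{2i-1}=\frac{2\sin\theta\,\sin(i\theta)}{\cos(i\theta)-\cos((i+1)\theta)},\qquad r_{2i}=r_{2i-1}=\frac{2\sin\theta\,\sin(i\theta)}{\cos((i-1)\theta)-\cos(i\theta)},\qquad i\in[1:k].$$ Then all $\ell_j,r_j$ are positive, $\ell_1\le\cdots\le\ell_n$, $r_1\ge\cdots\ge r_n$, $\mathsf{C}_1(\mathcal{N}_j)=1$ for every $j\in[1:n]$ (so $\mathsf{C}_1(\mathcal{N})=1$), and $\mathsf{C}_n(\mathcal{N})=2+2\cos\theta$. Consequently $\frac{\mathsf{C}_1(\mathcal{N})}{\mathsf{C}_n(\mathcal{N})}=\frac{1}{2+2\cos\left(\frac{2\pi}{n+2}\right)}$. Moreover, the rate $2+2\cos\theta$ is achieved by the schedule with $\lambda_{\{1,3,\dots,2k-1\}}=\lambda_{\{2,4,\dots,2k\}}=\frac12$ and $\lambda_{\mathcal{S}}=0$ otherwise.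
   Context: For a network $\mathcal{N}=\{(\ell_i,r_i): i\in[1:n]\}$ with nonnegative link capacities, with complements inside $[1:n]$ and maxima over empty sets equal to $0$, the approximate capacity is $\mathsf{C}_n(\mathcal{N})=\max_{\boldsymbol\lambda}\min_{\Omega\subseteq[1:n]}\sum_{\mathcal{S}\subseteq[1:n]}\lambda_{\mathcal{S}}\big(\max_{i\in\mathcal{S}^c\cap\Omega^c}\ell_i+\max_{i\in\mathcal{S}\cap\Omega}r_i\big)$, the maximum being over schedules $\boldsymbol\lambda=(\lambda_{\mathcal{S}})_{\mathcal{S}\subseteq[1:n]}$, $\lambda_{\mathcal{S}}\ge0$, $\sum_{\mathcal{S}}\lambda_{\mathcal{S}}=1$; the rate achieved by a fixed schedule is the inner minimum. $\mathsf{C}_1(\mathcal{N}_i)=\frac{\ell_ir_i}{\ell_i+r_i}$ and $\mathsf{C}_1(\mathcal{N})=\max_i\mathsf{C}_1(\mathcal{N}_i)$. *)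

theory Defs
  imports "HOL-Analysis.Analysis"
begin

(* A network with n relays is given by two link-capacity functions l r :: nat => real,
   of which only the values on the index set [1:n] = {1..n} matter. *)

definition maxover :: "nat set \<Rightarrow> (nat \<Rightarrow> real) \<Rightarrow> real" where
  "maxover A f = (if A = {} then 0 else Max (f ` A))"

definition is_schedule :: "nat \<Rightarrow> (nat set \<Rightarrow> real) \<Rightarrow> bool" where
  "is_schedule n lam \<longleftrightarrow> (\<forall>S \<in> Pow {1..n}. lam S \<ge> 0) \<and> (\<Sum>S \<in> Pow {1..n}. lam S) = 1"

definition sched_rate :: "nat \<Rightarrow> (nat \<Rightarrow> real) \<Rightarrow> (nat \<Rightarrow> real) \<Rightarrow> (nat set \<Rightarrow> real) \<Rightarrow> real" where
  "sched_rate n l r lam =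
     Min ((\<lambda>\<Omega>. \<Sum>S \<in> Pow {1..n}.
              lam S * (maxover (({1..n} - S) \<inter> ({1..n} - \<Omega>)) l + maxover (S \<inter> \<Omega>) r))
          ` Pow {1..n})"

text \<open>Approximate capacity C_n: the best rate over all schedules (supremum; it is attained).\<close>
definition Cn :: "nat \<Rightarrow> (nat \<Rightarrow> real) \<Rightarrow> (nat \<Rightarrow> real) \<Rightarrow> real" where
  "Cn n l r = Sup {sched_rate n l r lam | lam. is_schedule n lam}"

definition C1_single :: "real \<Rightarrow> real \<Rightarrow> real" where
  "C1_single a b = a * b / (a + b)"

definition C1 :: "nat \<Rightarrow> (nat \<Rightarrow> real) \<Rightarrow> (nat \<Rightarrow> real) \<Rightarrow> real" where
  "C1 n l r = maxover {1..n} (\<lambda>i. C1_single (l i) (r i))"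

end

theory Submission
  imports Defs
begin

lemma key6: fixes x t :: real assumes "cos x - cos (x + t) \<noteq> 0"
  shows "2 * sin t * sin x / (cos x - cos (x + t)) + 2 * sin t * sin (x + t) / (cos x - cos (x + t)) = 2 + 2 * cos t"
proof -
  have "2 * sin t * sin x + 2 * sin t * sin (x + t) = (2 + 2 * cos t) * (cos x - cos (x + t))"
  proof -
    have a: "sin t ^2 + cos t ^2 = 1" by simp
    show ?thesis unfolding sin_add cos_add using a by algebra
  qed
  then show ?thesis using assms by (simp add: add_divide_distrib[symmetric])
qed

lemma diffid6: fixes x t :: real
  shows "sin (x + t) * (cos x - cos (x + t)) - sin x * (cos (x + t) - cos (x + t + t)) = sin t * (1 - cos t)"
proof -
  have a: "sin t ^2 + cos t ^2 = 1" by simp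
  have b: "sin x ^2 + cos x ^2 = 1" by simp
  show ?thesis unfolding sin_add cos_add using a b by algebra
qed

lemma sumid6: fixes x t :: real shows "cos (x - t) - cos x + (cos x - cos (x + t)) = 2 * sin t * sin x"
  unfolding cos_diff cos_add by algebra

lemma fr6: fixes d d' S s s' :: real assumes "d > 0" "d' > 0" "S > 0" "s * d' \<le> s' * d"
  shows "2 * S * s / d \<le> 2 * S * s' / d'"
proof -
  have "2 * S * (s * d') \<le> 2 * S * (s' * d)" using assms by simp
  then show ?thesis using assms by (simp add: divide_simps mult.commute mult.left_commute)
qed

lemma c1g6: fixes d0 d1 S s :: real assumes "d0 > 0" "d1 > 0" "d0 + d1 = 2 * S * s" "S > 0" "s > 0"
  shows "(2 * S * s / d1) * (2 * S * s / d0) / ((2 * S * s / d1) + (2 * S * s / d0)) = 1"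
proof -
  have "(2 * S * s / d1) + (2 * S * s / d0) = (2 * S * s) * (d0 + d1) / (d0 * d1)"
    using assms(1,2) by (simp add: field_simps)
  also have "\<dots> = (2 * S * s / d1) * (2 * S * s / d0)" using assms(3) by simp
  finally have e: "(2 * S * s / d1) + (2 * S * s / d0) = (2 * S * s / d1) * (2 * S * s / d0)" .
  have "(2 * S * s / d1) * (2 * S * s / d0) > 0" using assms by simp
  then show ?thesis unfolding e by (metis divide_self less_irrefl)
qed

lemma mo_ge6: "finite A \<Longrightarrow> x \<in> A \<Longrightarrow> f x \<le> maxover A f"
  unfolding maxover_def by auto

lemma mo_nonneg6: "finite A \<Longrightarrow> (\<forall>x\<in>A. 0 \<le> f x) \<Longrightarrow> 0 \<le> maxover A (f::nat \<Rightarrow> real)"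
  unfolding maxover_def by (auto intro: order.trans[OF _ Max_ge])

lemma mo_le6: "finite A \<Longrightarrow> (\<forall>x\<in>A. f x \<le> M) \<Longrightarrow> 0 \<le> M \<Longrightarrow> maxover A (f::nat \<Rightarrow> real) \<le> M"
  unfolding maxover_def by auto

theorem mainTheorem6:
  fixes k :: nat and l r :: "nat \<Rightarrow> real"
  assumes k_pos: "k \<ge> 1"
    and l_def: "\<forall>j \<in> {1..2*k}. l j =
        (let i = (j + 1) div 2; \<theta> = 2 * pi / (real (2*k) + 2) in
          2 * sin \<theta> * sin (real i * \<theta>) / (cos (real i * \<theta>) - cos (real (i + 1) * \<theta>)))"
    and r_def: "\<forall>j \<in> {1..2*k}. r j =
        (let i = (j + 1) div 2; \<theta> = 2 * pi / (real (2*k) + 2) in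
          2 * sin \<theta> * sin (real i * \<theta>) / (cos ((real i - 1) * \<theta>) - cos (real i * \<theta>)))"
  shows "(\<forall>j \<in> {1..2*k}. l j > 0 \<and> r j > 0)
    \<and> (\<forall>i j. 1 \<le> i \<and> i \<le> j \<and> j \<le> 2*k \<longrightarrow> l i \<le> l j)
    \<and> (\<forall>i j. 1 \<le> i \<and> i \<le> j \<and> j \<le> 2*k \<longrightarrow> r i \<ge> r j)
    \<and> (\<forall>j \<in> {1..2*k}. C1_single (l j) (r j) = 1)
    \<and> C1 (2*k) l r = 1
    \<and> Cn (2*k) l r = 2 + 2 * cos (2 * pi / (real (2*k) + 2))
    \<and> C1 (2*k) l r / Cn (2*k) l r = 1 / (2 + 2 * cos (2 * pi / (real (2*k) + 2)))
    \<and> (let lam = (\<lambda>S. if S = {j \<in> {1..2*k}. odd j} \<or> S = {j \<in> {1..2*k}. even j}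
                      then 1/2 else 0 :: real)
       in is_schedule (2*k) lam
          \<and> sched_rate (2*k) l r lam = 2 + 2 * cos (2 * pi / (real (2*k) + 2)))"
proof -
  define t where "t = 2 * pi / (real (2*k) + 2)"
  define L where "L = (\<lambda>i::nat. 2 * sin t * sin (real i * t) / (cos (real i * t) - cos (real (i + 1) * t)))"
  define R where "R = (\<lambda>i::nat. 2 * sin t * sin (real i * t) / (cos ((real i - 1) * t) - cos (real i * t)))"
  define N where "N = {1..2*k}"
  have lj: "\<And>j. j \<in> N \<Longrightarrow> l j = L ((j+1) div 2)" using l_def unfolding N_def by (simp add: Let_def L_def t_def)
  have rj: "\<And>j. j \<in> N \<Longrightarrow> r j = R ((j+1) div 2)" using r_def unfolding N_def by (simp add: Let_def R_def t_def)
  have tk: "real (k+1) * t = pi" by (simp add: t_def field_simps)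
  have tpos: "t > 0" by (simp add: t_def)
  have Lx: "\<And>a. L a = 2 * sin t * sin (real a * t) / (cos (real a * t) - cos (real a * t + t))"
    by (simp add: L_def algebra_simps)
  have Lx1: "\<And>a. L (a+1) = 2 * sin t * sin (real a * t + t) / (cos (real a * t + t) - cos (real a * t + t + t))"
    by (simp add: L_def algebra_simps)
  have Rx1: "\<And>a. R (a+1) = 2 * sin t * sin (real a * t + t) / (cos (real a * t) - cos (real a * t + t))"
    by (simp add: R_def algebra_simps)
  have Rx: "\<And>a. R a = 2 * sin t * sin (real a * t) / (cos (real a * t - t) - cos (real a * t))"
    by (simp add: R_def algebra_simps)
  have D: "\<And>i. i \<le> k \<Longrightarrow> cos (real i * t) - cos (real i * t + t) > 0"
  proof -
    fix i assume "i \<le> k"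
    have "real i * t + t = real (i+1) * t" by (simp add: algebra_simps)
    also have "\<dots> \<le> real (k+1) * t" using \<open>i \<le> k\<close> tpos by (intro mult_right_mono) auto
    finally have "real i * t + t \<le> pi" using tk by simp
    then have "cos (real i * t + t) < cos (real i * t)"
      using tpos by (intro cos_monotone_0_pi) auto
    then show "cos (real i * t) - cos (real i * t + t) > 0" by simp
  qed
  have sinpos: "\<And>i. 1 \<le> i \<Longrightarrow> i \<le> k \<Longrightarrow> sin (real i * t) > 0"
  proof -
    fix i assume "1 \<le> i" "i \<le> k"
    have "real i * t < real (k+1) * t" using \<open>i \<le> k\<close> tpos by (intro mult_strict_right_mono) auto
    then have "real i * t < pi" using tk by simp
    moreover have "real i * t > 0" using \<open>1 \<le> i\<close> tpos by simp
    ultimately show "sin (real i * t) > 0" by (intro sin_gt_zero)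
  qed
  have st: "sin t > 0" using sinpos[of 1] k_pos by simp
  have Lpos: "\<And>i. 1 \<le> i \<Longrightarrow> i \<le> k \<Longrightarrow> L i > 0"
    using D sinpos st unfolding Lx by (simp add: divide_pos_pos)
  have Rpos: "\<And>i. 1 \<le> i \<Longrightarrow> i \<le> k \<Longrightarrow> R i > 0"
  proof -
    fix i assume a: "1 \<le> i" "i \<le> k"
    then obtain a where ia: "i = a + 1" by (metis add.commute le_Suc_ex)
    show "R i > 0" unfolding ia Rx1 using D[of a] sinpos[of "a+1"] st a ia
      by (simp add: algebra_simps divide_pos_pos)
  qed
  have LR: "\<And>a. a \<le> k \<Longrightarrow> L a + R (a+1) = 2 + 2 * cos t"
  proof -
    fix a assume "a \<le> k"
    then have "cos (real a * t) - cos (real a * t + t) \<noteq> 0" using D[of a] by simp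
    from key6[OF this] show "L a + R (a+1) = 2 + 2 * cos t" unfolding Lx Rx1 .
  qed
  have L0: "L 0 = 0" by (simp add: L_def)
  have Rk: "R (k+1) = 0" unfolding R_def using tk by simp
  have R1: "R 1 = 2 + 2 * cos t" using LR[of 0] L0 by simp
  have Lk: "L k = 2 + 2 * cos t" using LR[of k] Rk by simp
  have C1s: "\<And>i. 1 \<le> i \<Longrightarrow> i \<le> k \<Longrightarrow> C1_single (L i) (R i) = 1"
  proof -
    fix i assume a: "1 \<le> i" "i \<le> k"
    then obtain a where ia: "i = a + 1" by (metis add.commute le_Suc_ex)
    have d0: "cos (real i * t - t) - cos (real i * t) > 0" using D[of a] a ia by (simp add: algebra_simps)
    have d1: "cos (real i * t) - cos (real i * t + t) > 0" using D[of i] a by simp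
    show "C1_single (L i) (R i) = 1" unfolding C1_single_def Lx Rx
      by (rule c1g6[OF d0 d1 _ st sinpos[OF a]]) (use sumid6 in simp)
  qed
  have Lstep: "\<And>i. 1 \<le> i \<Longrightarrow> i + 1 \<le> k \<Longrightarrow> L i \<le> L (i+1)"
  proof -
    fix i assume a: "1 \<le> i" "i + 1 \<le> k"
    have e: "sin (real i * t + t) * (cos (real i * t) - cos (real i * t + t)) - sin (real i * t) * (cos (real i * t + t) - cos (real i * t + t + t)) \<ge> 0"
      unfolding diffid6 using st by (simp add: mult_nonneg_nonneg)
    have d1: "cos (real i * t + t) - cos (real i * t + t + t) > 0" using D[of "i+1"] a by (simp add: algebra_simps)
    have e2: "sin (real i * t) * (cos (real i * t + t) - cos (real i * t + t + t)) \<le> sin (real i * t + t) * (cos (real i * t) - cos (real i * t + t))"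
      using e by linarith
    have D1: "cos (real i * t) - cos (real i * t + t) > 0" using D[of i] a by simp
    show "L i \<le> L (i+1)" unfolding Lx1 unfolding Lx
      using fr6[OF D1 d1 st e2] .
  qed
  have Lmono: "\<And>i j. 1 \<le> i \<Longrightarrow> i \<le> j \<Longrightarrow> j \<le> k \<Longrightarrow> L i \<le> L j"
  proof -
    fix i j :: nat assume a: "1 \<le> i" "i \<le> j" "j \<le> k"
    have "\<forall>d. i + d \<le> k \<longrightarrow> L i \<le> L (i + d)"
    proof
      fix d show "i + d \<le> k \<longrightarrow> L i \<le> L (i + d)"
      proof (induction d)
        case 0 then show ?case by simp
      next
        case (Suc d)
        then show ?case using Lstep[of "i+d"] a by auto
      qed
    qed
    then show "L i \<le> L j" using a by (metis le_add_diff_inverse)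
  qed
  have invR: "\<And>i. 1 \<le> i \<Longrightarrow> i \<le> k \<Longrightarrow> inverse (R i) = 1 - inverse (L i)"
  proof -
    fix i assume a: "1 \<le> i" "i \<le> k"
    have p: "L i > 0" "R i > 0" using Lpos Rpos a by auto
    have "L i * R i / (L i + R i) = 1" using C1s[OF a] unfolding C1_single_def .
    then have "L i * R i = L i + R i" using p by (simp add: divide_eq_1_iff)
    then show "inverse (R i) = 1 - inverse (L i)" using p by (simp add: field_simps)
  qed
  have Rmono: "\<And>i j. 1 \<le> i \<Longrightarrow> i \<le> j \<Longrightarrow> j \<le> k \<Longrightarrow> R j \<le> R i"
  proof -
    fix i j :: nat assume a: "1 \<le> i" "i \<le> j" "j \<le> k"
    have "inverse (L j) \<le> inverse (L i)" using Lmono[OF a] Lpos a by (intro le_imp_inverse_le) auto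
    then have "inverse (R i) \<le> inverse (R j)" using invR a by simp
    moreover have "0 < R i" using Rpos a by simp
    ultimately show "R j \<le> R i" by (rule inverse_le_imp_le)
  qed
  have idx: "\<And>j. j \<in> N \<Longrightarrow> 1 \<le> (j+1) div 2 \<and> (j+1) div 2 \<le> k" unfolding N_def by auto
  have lpos: "\<forall>j\<in>N. l j > 0 \<and> r j > 0" using idx lj rj Lpos Rpos by simp
  have lmono: "\<forall>i j. 1 \<le> i \<and> i \<le> j \<and> j \<le> 2*k \<longrightarrow> l i \<le> l j"
  proof (intro allI impI)
    fix i j assume a: "1 \<le> i \<and> i \<le> j \<and> j \<le> 2*k"
    then have "i \<in> N" "j \<in> N" unfolding N_def by auto
    moreover have "(i+1) div 2 \<le> (j+1) div 2" using a by (intro div_le_mono) auto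
    ultimately show "l i \<le> l j" using lj idx Lmono by metis
  qed
  have rmono: "\<forall>i j. 1 \<le> i \<and> i \<le> j \<and> j \<le> 2*k \<longrightarrow> r i \<ge> r j"
  proof (intro allI impI)
    fix i j assume a: "1 \<le> i \<and> i \<le> j \<and> j \<le> 2*k"
    then have "i \<in> N" "j \<in> N" unfolding N_def by auto
    moreover have "(i+1) div 2 \<le> (j+1) div 2" using a by (intro div_le_mono) auto
    ultimately show "r i \<ge> r j" using rj idx Rmono by metis
  qed
  have c1j: "\<forall>j\<in>N. C1_single (l j) (r j) = 1" using idx lj rj C1s by simp
  have C1v: "C1 (2*k) l r = 1"
  proof -
    have "(\<lambda>i. C1_single (l i) (r i)) ` {1..2*k} = {1}" using c1j k_pos unfolding N_def by force
    then show ?thesis unfolding C1_def maxover_def using k_pos by simp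
  qed
  have finN: "finite N" unfolding N_def by simp
  have lle: "\<forall>j\<in>N. l j \<le> L k"
  proof
    fix j assume j: "j \<in> N"
    show "l j \<le> L k" unfolding lj[OF j] using idx[OF j] by (intro Lmono) auto
  qed
  have rle: "\<forall>j\<in>N. r j \<le> R 1"
  proof
    fix j assume j: "j \<in> N"
    show "r j \<le> R 1" unfolding rj[OF j] using idx[OF j] by (intro Rmono) auto
  qed
  have cpos: "2 + 2 * cos t \<ge> 0" using cos_ge_minus_one[of t] by linarith
  define Od where "Od = {j \<in> {1..2*k}. odd j}"
  define E where "E = {j \<in> {1..2*k}. even j}"
  define lam where "lam = (\<lambda>S. if S = {j \<in> {1..2*k}. odd j} \<or> S = {j \<in> {1..2*k}. even j} then 1/2 else 0 :: real)"
  have "1 \<in> Od" "1 \<notin> E" using k_pos unfolding Od_def E_def by auto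
  then have OE: "Od \<noteq> E" by blast
  have OEP: "{Od, E} \<subseteq> Pow {1..2*k}" unfolding Od_def E_def by auto
  have lamOE: "\<And>S. lam S = (if S = Od \<or> S = E then 1/2 else 0)" by (simp add: lam_def Od_def E_def)
  have sumlam: "\<And>g. (\<Sum>S \<in> Pow {1..2*k}. lam S * g S) = g Od / 2 + g E / 2"
  proof -
    fix g :: "nat set \<Rightarrow> real"
    have "(\<Sum>S \<in> Pow {1..2*k}. lam S * g S) = (\<Sum>S \<in> {Od,E}. lam S * g S)"
      by (rule sum.mono_neutral_right) (use OEP in \<open>simp_all add: lamOE\<close>)
    also have "\<dots> = g Od / 2 + g E / 2" using OE by (simp add: lamOE)
    finally show "(\<Sum>S \<in> Pow {1..2*k}. lam S * g S) = g Od / 2 + g E / 2" .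
  qed
  have sched: "is_schedule (2*k) lam"
    unfolding is_schedule_def using sumlam[of "\<lambda>_. 1"] by (simp add: lam_def)
  define H where "H = (\<lambda>X \<Omega>. maxover (X - \<Omega>) l + maxover (X \<inter> \<Omega>) r)"
  have NO: "N - Od = E" "N - E = Od" unfolding N_def Od_def E_def by auto
  have OEN: "Od \<subseteq> N" "E \<subseteq> N" unfolding N_def Od_def E_def by auto
  have Hlow: "\<And>X e \<Omega>. X \<subseteq> N \<Longrightarrow> (\<And>i. 1 \<le> i \<Longrightarrow> i \<le> k \<Longrightarrow> e i \<in> X \<and> l (e i) = L i \<and> r (e i) = R i)
      \<Longrightarrow> 2 + 2 * cos t \<le> H X \<Omega>"
  proof -
    fix X e \<Omega> assume XN: "X \<subseteq> N" and eX: "\<And>i. 1 \<le> i \<Longrightarrow> i \<le> k \<Longrightarrow> e i \<in> X \<and> l (e i) = L i \<and> r (e i) = R i"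
    have finX: "finite X" using XN finN finite_subset by blast
    have lpX: "\<forall>x\<in>X. 0 \<le> l x \<and> 0 \<le> r x" using XN lpos by (auto simp: less_imp_le)
    define I where "I = {i \<in> {1..k}. e i \<notin> \<Omega>}"
    define a where "a = (if I = {} then 0 else Max I)"
    have finI: "finite I" unfolding I_def by simp
    have ak: "a \<le> k" unfolding a_def I_def using finI I_def by auto
    have h1: "L a \<le> maxover (X - \<Omega>) l"
    proof (cases "I = {}")
      case True
      then have "a = 0" unfolding a_def by simp
      then show ?thesis unfolding L0 using finX lpX
        by (simp add: L0) (intro mo_nonneg6, auto)
    next
      case False
      then have "a \<in> I" unfolding a_def using finI by simp
      then have "e a \<in> X - \<Omega>" "l (e a) = L a" using eX unfolding I_def by auto
      then show ?thesis using mo_ge6[of "X - \<Omega>" "e a" l] finX by simp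
    qed
    have h2: "R (a+1) \<le> maxover (X \<inter> \<Omega>) r"
    proof (cases "a = k")
      case True
      then show ?thesis unfolding True Rk using finX lpX by (intro mo_nonneg6) auto
    next
      case False
      then have a1: "1 \<le> a + 1" "a + 1 \<le> k" using ak by auto
      have "a + 1 \<notin> I"
      proof
        assume "a + 1 \<in> I"
        then have "I \<noteq> {}" by auto
        then have "a + 1 \<le> a" using \<open>a + 1 \<in> I\<close> finI unfolding a_def by simp
        then show False by simp
      qed
      then have "e (a+1) \<in> \<Omega>" using a1 unfolding I_def by auto
      then have "e (a+1) \<in> X \<inter> \<Omega>" "r (e (a+1)) = R (a+1)" using eX[OF a1] by auto
      then show ?thesis using mo_ge6[of "X \<inter> \<Omega>" "e (a+1)" r] finX by simp
    qed
    show "2 + 2 * cos t \<le> H X \<Omega>" unfolding H_def using h1 h2 LR[OF ak] by linarith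
  qed
  have HE: "\<And>\<Omega>. 2 + 2 * cos t \<le> H E \<Omega>"
  proof -
    fix \<Omega>
    show "2 + 2 * cos t \<le> H E \<Omega>"
    proof (rule Hlow[OF OEN(2), of "\<lambda>i. 2 * i"])
      fix i assume "1 \<le> i" "i \<le> k"
      then have "2 * i \<in> E" "2 * i \<in> N" "(2 * i + 1) div 2 = i" unfolding E_def N_def by auto
      then show "2 * i \<in> E \<and> l (2 * i) = L i \<and> r (2 * i) = R i" using lj rj by metis
    qed
  qed
  have HO: "\<And>\<Omega>. 2 + 2 * cos t \<le> H Od \<Omega>"
  proof -
    fix \<Omega>
    show "2 + 2 * cos t \<le> H Od \<Omega>"
    proof (rule Hlow[OF OEN(1), of "\<lambda>i. 2 * i - 1"])
      fix i assume "1 \<le> i" "i \<le> k"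
      then have "2 * i - 1 \<in> Od" "2 * i - 1 \<in> N" "(2 * i - 1 + 1) div 2 = i" unfolding Od_def N_def by auto
      then show "2 * i - 1 \<in> Od \<and> l (2 * i - 1) = L i \<and> r (2 * i - 1) = R i" using lj rj by metis
    qed
  qed
  have H0: "\<And>X. X \<subseteq> N \<Longrightarrow> H X {} \<le> 2 + 2 * cos t"
  proof -
    fix X assume XN: "X \<subseteq> N"
    have finX: "finite X" using XN finN finite_subset by blast
    have "maxover X l \<le> L k" using mo_le6[of X l "L k"] finX XN lle Lk cpos by auto
    then show "H X {} \<le> 2 + 2 * cos t" unfolding H_def using Lk by (simp add: maxover_def)
  qed
  define G where "G = (\<lambda>\<Omega>. H Od \<Omega> / 2 + H E \<Omega> / 2)"
  have srG: "sched_rate (2*k) l r lam = Min (G ` Pow {1..2*k})"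
  proof -
    have "\<And>\<Omega>. \<Omega> \<in> Pow {1..2*k} \<Longrightarrow> (\<Sum>S \<in> Pow {1..2*k}.
              lam S * (maxover (({1..2*k} - S) \<inter> ({1..2*k} - \<Omega>)) l + maxover (S \<inter> \<Omega>) r)) = G \<Omega>"
    proof -
      fix \<Omega> assume "\<Omega> \<in> Pow {1..2*k}"
      have a: "({1..2*k} - Od) \<inter> ({1..2*k} - \<Omega>) = E - \<Omega>" "({1..2*k} - E) \<inter> ({1..2*k} - \<Omega>) = Od - \<Omega>"
        using NO OEN unfolding N_def by auto
      show "(\<Sum>S \<in> Pow {1..2*k}.
              lam S * (maxover (({1..2*k} - S) \<inter> ({1..2*k} - \<Omega>)) l + maxover (S \<inter> \<Omega>) r)) = G \<Omega>"
        unfolding sumlam a G_def H_def by (simp add: field_simps)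
    qed
    then have "(\<lambda>\<Omega>. \<Sum>S \<in> Pow {1..2*k}.
              lam S * (maxover (({1..2*k} - S) \<inter> ({1..2*k} - \<Omega>)) l + maxover (S \<inter> \<Omega>) r)) ` Pow {1..2*k}
       = G ` Pow {1..2*k}" by (intro image_cong) auto
    then show ?thesis unfolding sched_rate_def by (simp only:)
  qed
  have srv: "sched_rate (2*k) l r lam = 2 + 2 * cos t"
    unfolding srG
  proof (rule Min_eqI)
    show "finite (G ` Pow {1..2*k})" by simp
    have Gl: "\<And>\<Omega>. 2 + 2 * cos t \<le> G \<Omega>"
    proof -
      fix \<Omega>
      have "2 + 2 * cos t \<le> H Od \<Omega>" "2 + 2 * cos t \<le> H E \<Omega>" using HO HE by auto
      then show "2 + 2 * cos t \<le> G \<Omega>" unfolding G_def by linarith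
    qed
    then show "\<And>y. y \<in> G ` Pow {1..2 * k} \<Longrightarrow> 2 + 2 * cos t \<le> y" by blast
    have "H Od {} \<le> 2 + 2 * cos t" "H E {} \<le> 2 + 2 * cos t" using H0 OEN by auto
    then have "G {} \<le> 2 + 2 * cos t" unfolding G_def by linarith
    moreover have "G {} \<ge> 2 + 2 * cos t" using Gl by auto
    ultimately have "G {} = 2 + 2 * cos t" by simp
    then show "2 + 2 * cos t \<in> G ` Pow {1..2 * k}" by (metis Pow_bottom image_eqI)
  qed
  have upper: "\<And>mu. is_schedule (2*k) mu \<Longrightarrow> sched_rate (2*k) l r mu \<le> 2 + 2 * cos t"
  proof -
    fix mu assume sm: "is_schedule (2*k) mu"
    have "sched_rate (2*k) l r mu \<le> (\<Sum>S \<in> Pow {1..2*k}.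
              mu S * (maxover (({1..2*k} - S) \<inter> ({1..2*k} - {1..2*k})) l + maxover (S \<inter> {1..2*k}) r))"
      unfolding sched_rate_def by (rule Min_le) (simp, intro imageI, simp)
    also have "\<dots> \<le> (\<Sum>S \<in> Pow {1..2*k}. mu S * R 1)"
    proof (rule sum_mono)
      fix S assume S: "S \<in> Pow {1..2*k}"
      have "maxover (S \<inter> {1..2*k}) r \<le> R 1" using rle R1 cpos
        by (intro mo_le6) (auto simp: N_def)
      moreover have "mu S \<ge> 0" using sm S unfolding is_schedule_def by auto
      ultimately show "mu S * (maxover (({1..2*k} - S) \<inter> ({1..2*k} - {1..2*k})) l + maxover (S \<inter> {1..2*k}) r) \<le> mu S * R 1"
        by (simp add: maxover_def mult_left_mono)
    qed
    also have "\<dots> = R 1" using sm unfolding is_schedule_def by (simp add: sum_distrib_right[symmetric])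
    finally show "sched_rate (2*k) l r mu \<le> 2 + 2 * cos t" using R1 by simp
  qed
  have Cnv: "Cn (2*k) l r = 2 + 2 * cos t"
    unfolding Cn_def
  proof (rule cSup_eq_maximum)
    show "2 + 2 * cos t \<in> {sched_rate (2 * k) l r lam |lam. is_schedule (2 * k) lam}"
      using sched srv by force
    show "\<And>x. x \<in> {sched_rate (2 * k) l r lam |lam. is_schedule (2 * k) lam} \<Longrightarrow> x \<le> 2 + 2 * cos t"
      using upper by blast
  qed
  show ?thesis
    using lpos lmono rmono c1j C1v Cnv sched srv unfolding N_def t_def[symmetric] lam_def Let_def
    by simp
qed

end
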